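(* Let $\Phi$ be a potential-inner automorphism of $\mathcal C$, witnessed by bijections $s_A:A\to\Phi(A)$ with $\Phi(\mu)=s_B\circ\mu\circ s_A^{-1}$ for all morphisms $\mu:A\to B$ of $\mathcal C$. For each object $A$, let $A^*$ denote the algebra on the underlying set of $\Phi(A)$ obtained by transporting the structure of $A$ along $s_A$, so that $s_A:A\to A^*$ is an isomorphism. Then $\Phi$ is inner if and only if there exists a central function $A\mapsto c_A$ on $\mathcal C$ such that, for every object $A$, the map $c_{\Phi(A)}$ is an isomorphism of the algebra $\Phi(A)$ onto the algebra $A^*$.
   Context: Let $\mathcal V$ be a variety of universal algebras, and let $\mathcal C$ be a full subcategory of the category $\Theta(\mathcal V)$ of all $\mathcal V$-algebras and homomorphisms, containing a free $\mathcal V$-algebra on one generator. An automorphism $\Phi$ of $\mathcal C$ is potential-inner if there are bijections of underlying sets $s_A:A\to\Phi(A)$ with $\Phi(\mu)=s_B\circ\mu\circ s_A^{-1}$ for every morphism $\mu:A\to B$. It is inner if such $s_A$ can be chosen to be algebra isomorphisms. A central function on $\mathcal C$ assigns to every object $A$ a permutation $c_A$ of its underlying set such that $c_B\circ\nu\circ c_A^{-1}=\nu$ for every morphism $\nu:A\to B$ of $\mathcal C$. *)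

theory Defs
  imports Main "HOL-Library.FuncSet"
begin

text \<open>An algebra of signature 'f (with arities given separately) whose elements live in the
universe type 'u: an underlying set and an interpretation of each operation symbol.\<close>
record ('f, 'u) ualg =
  ucarrier :: "'u set"
  uops :: "'f \<Rightarrow> 'u list \<Rightarrow> 'u"

definition is_alg :: "('f \<Rightarrow> nat) \<Rightarrow> ('f, 'u) ualg \<Rightarrow> bool" where
  "is_alg ar A \<longleftrightarrow>
     (\<forall>f xs. length xs = ar f \<longrightarrow> set xs \<subseteq> ucarrier A \<longrightarrow> uops A f xs \<in> ucarrier A)"

datatype 'f trm = Var nat | Op 'f "'f trm list"

fun wf_trm :: "('f \<Rightarrow> nat) \<Rightarrow> 'f trm \<Rightarrow> bool" where
  "wf_trm ar (Var n) = True"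
| "wf_trm ar (Op f ts) = (length ts = ar f \<and> (\<forall>t\<in>set ts. wf_trm ar t))"

fun eval_trm :: "('f, 'u) ualg \<Rightarrow> (nat \<Rightarrow> 'u) \<Rightarrow> 'f trm \<Rightarrow> 'u" where
  "eval_trm A \<rho> (Var n) = \<rho> n"
| "eval_trm A \<rho> (Op f ts) = uops A f (map (eval_trm A \<rho>) ts)"

definition in_variety ::
  "('f \<Rightarrow> nat) \<Rightarrow> ('f trm \<times> 'f trm) set \<Rightarrow> ('f, 'u) ualg \<Rightarrow> bool" where
  "in_variety ar E A \<longleftrightarrow> is_alg ar A \<and>
     (\<forall>(l, r)\<in>E. \<forall>\<rho>. (\<forall>n. \<rho> n \<in> ucarrier A) \<longrightarrow> eval_trm A \<rho> l = eval_trm A \<rho> r)"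

definition hom :: "('f \<Rightarrow> nat) \<Rightarrow> ('f, 'u) ualg \<Rightarrow> ('f, 'u) ualg \<Rightarrow> ('u \<Rightarrow> 'u) set" where
  "hom ar A B = {h. (\<forall>x\<in>ucarrier A. h x \<in> ucarrier B) \<and>
     (\<forall>f xs. length xs = ar f \<longrightarrow> set xs \<subseteq> ucarrier A \<longrightarrow>
        h (uops A f xs) = uops B f (map h xs))}"

definition iso :: "('f \<Rightarrow> nat) \<Rightarrow> ('f, 'u) ualg \<Rightarrow> ('f, 'u) ualg \<Rightarrow> ('u \<Rightarrow> 'u) set" where
  "iso ar A B = {h. h \<in> hom ar A B \<and> bij_betw h (ucarrier A) (ucarrier B)}"

text \<open>Morphisms of the category: homomorphisms, represented extensionally on the domain.\<close>
definition Hom :: "('f \<Rightarrow> nat) \<Rightarrow> ('f, 'u) ualg \<Rightarrow> ('f, 'u) ualg \<Rightarrow> ('u \<Rightarrow> 'u) set" where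
  "Hom ar A B = hom ar A B \<inter> extensional (ucarrier A)"

definition free_on_one ::
  "('f \<Rightarrow> nat) \<Rightarrow> ('f trm \<times> 'f trm) set \<Rightarrow> ('f, 'u) ualg \<Rightarrow> 'u \<Rightarrow> bool" where
  "free_on_one ar E F x \<longleftrightarrow> in_variety ar E F \<and> x \<in> ucarrier F \<and>
     (\<forall>B. in_variety ar E B \<longrightarrow> (\<forall>b\<in>ucarrier B. \<exists>!h. h \<in> Hom ar F B \<and> h x = b))"

text \<open>A full subcategory of Theta(V) is given by its set of objects Obj.
An automorphism is given by an object map Fo and morphism maps Fm A B.\<close>
definition is_automorphism ::
  "('f \<Rightarrow> nat) \<Rightarrow> ('f, 'u) ualg set \<Rightarrow> (('f, 'u) ualg \<Rightarrow> ('f, 'u) ualg)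
   \<Rightarrow> (('f, 'u) ualg \<Rightarrow> ('f, 'u) ualg \<Rightarrow> ('u \<Rightarrow> 'u) \<Rightarrow> ('u \<Rightarrow> 'u)) \<Rightarrow> bool" where
  "is_automorphism ar Obj Fo Fm \<longleftrightarrow>
     bij_betw Fo Obj Obj \<and>
     (\<forall>A\<in>Obj. \<forall>B\<in>Obj. bij_betw (Fm A B) (Hom ar A B) (Hom ar (Fo A) (Fo B))) \<and>
     (\<forall>A\<in>Obj. Fm A A (restrict id (ucarrier A)) = restrict id (ucarrier (Fo A))) \<and>
     (\<forall>A\<in>Obj. \<forall>B\<in>Obj. \<forall>C\<in>Obj. \<forall>f\<in>Hom ar A B. \<forall>g\<in>Hom ar B C.
        Fm A C (compose (ucarrier A) g f) = compose (ucarrier (Fo A)) (Fm B C g) (Fm A B f))"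

definition implements ::
  "('f \<Rightarrow> nat) \<Rightarrow> ('f, 'u) ualg set \<Rightarrow> (('f, 'u) ualg \<Rightarrow> ('f, 'u) ualg)
   \<Rightarrow> (('f, 'u) ualg \<Rightarrow> ('f, 'u) ualg \<Rightarrow> ('u \<Rightarrow> 'u) \<Rightarrow> ('u \<Rightarrow> 'u))
   \<Rightarrow> (('f, 'u) ualg \<Rightarrow> 'u \<Rightarrow> 'u) \<Rightarrow> bool" where
  "implements ar Obj Fo Fm s \<longleftrightarrow>
     (\<forall>A\<in>Obj. bij_betw (s A) (ucarrier A) (ucarrier (Fo A))) \<and>
     (\<forall>A\<in>Obj. \<forall>B\<in>Obj. \<forall>\<mu>\<in>Hom ar A B. \<forall>y\<in>ucarrier (Fo A).
        Fm A B \<mu> y = s B (\<mu> (inv_into (ucarrier A) (s A) y)))"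

definition potential_inner ::
  "('f \<Rightarrow> nat) \<Rightarrow> ('f, 'u) ualg set \<Rightarrow> (('f, 'u) ualg \<Rightarrow> ('f, 'u) ualg)
   \<Rightarrow> (('f, 'u) ualg \<Rightarrow> ('f, 'u) ualg \<Rightarrow> ('u \<Rightarrow> 'u) \<Rightarrow> ('u \<Rightarrow> 'u)) \<Rightarrow> bool" where
  "potential_inner ar Obj Fo Fm \<longleftrightarrow> (\<exists>s. implements ar Obj Fo Fm s)"

definition inner ::
  "('f \<Rightarrow> nat) \<Rightarrow> ('f, 'u) ualg set \<Rightarrow> (('f, 'u) ualg \<Rightarrow> ('f, 'u) ualg)
   \<Rightarrow> (('f, 'u) ualg \<Rightarrow> ('f, 'u) ualg \<Rightarrow> ('u \<Rightarrow> 'u) \<Rightarrow> ('u \<Rightarrow> 'u)) \<Rightarrow> bool" where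
  "inner ar Obj Fo Fm \<longleftrightarrow>
     (\<exists>s. implements ar Obj Fo Fm s \<and> (\<forall>A\<in>Obj. s A \<in> iso ar A (Fo A)))"

definition central_function ::
  "('f \<Rightarrow> nat) \<Rightarrow> ('f, 'u) ualg set \<Rightarrow> (('f, 'u) ualg \<Rightarrow> 'u \<Rightarrow> 'u) \<Rightarrow> bool" where
  "central_function ar Obj c \<longleftrightarrow>
     (\<forall>A\<in>Obj. bij_betw (c A) (ucarrier A) (ucarrier A)) \<and>
     (\<forall>A\<in>Obj. \<forall>B\<in>Obj. \<forall>\<nu>\<in>Hom ar A B. \<forall>x\<in>ucarrier A.
        c B (\<nu> (inv_into (ucarrier A) (c A) x)) = \<nu> x)"

definition transport :: "('f, 'u) ualg \<Rightarrow> ('u \<Rightarrow> 'u) \<Rightarrow> ('f, 'u) ualg" where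
  "transport A s = \<lparr>ucarrier = s ` ucarrier A,
     uops = (\<lambda>f xs. s (uops A f (map (inv_into (ucarrier A) s) xs)))\<rparr>"

end

theory Submission
  imports Defs
begin

lemma hom_comp:
  assumes "f \<in> hom ar A B" "g \<in> hom ar B C"
  shows "(\<lambda>x. g (f x)) \<in> hom ar A C"
proof -
  have f1: "\<And>x. x \<in> ucarrier A \<Longrightarrow> f x \<in> ucarrier B"
   and f2: "\<And>fa xs. length xs = ar fa \<Longrightarrow> set xs \<subseteq> ucarrier A \<Longrightarrow> f (uops A fa xs) = uops B fa (map f xs)"
    using assms(1) unfolding hom_def by auto
  have g1: "\<And>x. x \<in> ucarrier B \<Longrightarrow> g x \<in> ucarrier C"
   and g2: "\<And>fa xs. length xs = ar fa \<Longrightarrow> set xs \<subseteq> ucarrier B \<Longrightarrow> g (uops B fa xs) = uops C fa (map g xs)"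
    using assms(2) unfolding hom_def by auto
  have "g (f (uops A fa xs)) = uops C fa (map (\<lambda>x. g (f x)) xs)"
    if "length xs = ar fa" "set xs \<subseteq> ucarrier A" for fa xs
  proof -
    have "set (map f xs) \<subseteq> ucarrier B" using that(2) f1 by auto
    then have "g (uops B fa (map f xs)) = uops C fa (map g (map f xs))" using g2 that(1) by simp
    then show ?thesis using f2[OF that] by (simp add: comp_def)
  qed
  then show ?thesis unfolding hom_def using f1 g1 by blast
qed

lemma iso_comp:
  assumes "f \<in> iso ar A B" "g \<in> iso ar B C"
  shows "(\<lambda>x. g (f x)) \<in> iso ar A C"
proof -
  have "bij_betw (g \<circ> f) (ucarrier A) (ucarrier C)"
    using assms unfolding iso_def by (auto intro: bij_betw_trans)
  then show ?thesis using assms hom_comp unfolding iso_def by (auto simp: comp_def)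
qed

lemma iso_inv:
  assumes alg: "is_alg ar A" and h: "h \<in> iso ar A B"
  shows "inv_into (ucarrier A) h \<in> iso ar B A"
proof -
  have bij: "bij_betw h (ucarrier A) (ucarrier B)" and hh: "h \<in> hom ar A B"
    using h unfolding iso_def by auto
  let ?g = "inv_into (ucarrier A) h"
  have bg: "bij_betw ?g (ucarrier B) (ucarrier A)" using bij by (rule bij_betw_inv_into)
  have gin: "\<And>y. y \<in> ucarrier B \<Longrightarrow> ?g y \<in> ucarrier A" using bg bij_betwE by blast
  have hg: "\<And>y. y \<in> ucarrier B \<Longrightarrow> h (?g y) = y" using bij bij_betw_inv_into_right by metis
  have gh: "\<And>x. x \<in> ucarrier A \<Longrightarrow> ?g (h x) = x" using bij bij_betw_inv_into_left by metis
  have "?g (uops B f ys) = uops A f (map ?g ys)" if "length ys = ar f" "set ys \<subseteq> ucarrier B" for f ys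
  proof -
    have s1: "set (map ?g ys) \<subseteq> ucarrier A" using that gin by auto
    have m: "map h (map ?g ys) = ys" using that(2) hg by (induct ys) auto
    have h2: "\<And>fa xs. length xs = ar fa \<Longrightarrow> set xs \<subseteq> ucarrier A \<Longrightarrow> h (uops A fa xs) = uops B fa (map h xs)"
      using hh unfolding hom_def by blast
    have l: "length (map ?g ys) = ar f" using that(1) by simp
    have "h (uops A f (map ?g ys)) = uops B f ys"
      using h2[OF l s1] m by simp
    moreover have "uops A f (map ?g ys) \<in> ucarrier A"
      using alg s1 l unfolding is_alg_def by blast
    ultimately show ?thesis using gh by force
  qed
  then have "?g \<in> hom ar B A" unfolding hom_def using gin by auto
  then show ?thesis using bg unfolding iso_def by auto
qed

lemma transport_iso:
  assumes "inj_on s (ucarrier A)"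
  shows "s \<in> iso ar A (transport A s)"
proof -
  have "map (inv_into (ucarrier A) s) (map s xs) = xs" if "set xs \<subseteq> ucarrier A" for xs
    using that assms by (induct xs) auto
  then have "s \<in> hom ar A (transport A s)" unfolding hom_def transport_def by auto
  moreover have "bij_betw s (ucarrier A) (ucarrier (transport A s))"
    using assms unfolding transport_def bij_betw_def by auto
  ultimately show ?thesis unfolding iso_def by auto
qed

lemma inv_comp:
  assumes f: "bij_betw f S T" and g: "bij_betw g T U" and y: "y \<in> U"
  shows "inv_into S (\<lambda>x. g (f x)) y = inv_into S f (inv_into T g y)"
proof -
  have bgf: "bij_betw (g \<circ> f) S U" using f g by (rule bij_betw_trans)
  have i: "inj_on (\<lambda>x. g (f x)) S" using bgf unfolding bij_betw_def comp_def by auto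
  have a: "inv_into T g y \<in> T" using g y by (meson bij_betwE bij_betw_inv_into)
  have b: "inv_into S f (inv_into T g y) \<in> S" using f a by (meson bij_betwE bij_betw_inv_into)
  have "g (f (inv_into S f (inv_into T g y))) = y"
    using f g a y by (metis bij_betw_inv_into_right)
  then show ?thesis using i b by (metis inv_into_f_eq)
qed

theorem mainTheorem3:
  fixes ar :: "'f \<Rightarrow> nat"
    and E :: "('f trm \<times> 'f trm) set"
    and Obj :: "('f, 'u) ualg set"
    and Fo :: "('f, 'u) ualg \<Rightarrow> ('f, 'u) ualg"
    and Fm :: "('f, 'u) ualg \<Rightarrow> ('f, 'u) ualg \<Rightarrow> ('u \<Rightarrow> 'u) \<Rightarrow> ('u \<Rightarrow> 'u)"
    and s :: "('f, 'u) ualg \<Rightarrow> 'u \<Rightarrow> 'u"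
  assumes E_wf: "\<forall>(l, r)\<in>E. wf_trm ar l \<and> wf_trm ar r"
    and Obj_V: "\<forall>A\<in>Obj. in_variety ar E A"
    and free: "\<exists>F\<in>Obj. \<exists>x. free_on_one ar E F x"
    and aut: "is_automorphism ar Obj Fo Fm"
    and s_impl: "implements ar Obj Fo Fm s"
  shows "inner ar Obj Fo Fm \<longleftrightarrow>
    (\<exists>c. central_function ar Obj c \<and>
       (\<forall>A\<in>Obj. c (Fo A) \<in> iso ar (Fo A) (transport A (s A))))"
proof -
  have alg: "\<And>A. A \<in> Obj \<Longrightarrow> is_alg ar A" using Obj_V unfolding in_variety_def by auto
  have FoB: "bij_betw Fo Obj Obj" and FmB: "\<And>A B. A \<in> Obj \<Longrightarrow> B \<in> Obj \<Longrightarrow>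
      bij_betw (Fm A B) (Hom ar A B) (Hom ar (Fo A) (Fo B))"
    using aut unfolding is_automorphism_def by auto
  have sb: "\<And>A. A \<in> Obj \<Longrightarrow> bij_betw (s A) (ucarrier A) (ucarrier (Fo A))"
   and sF: "\<And>A B \<mu> y. A \<in> Obj \<Longrightarrow> B \<in> Obj \<Longrightarrow> \<mu> \<in> Hom ar A B \<Longrightarrow> y \<in> ucarrier (Fo A) \<Longrightarrow>
        Fm A B \<mu> y = s B (\<mu> (inv_into (ucarrier A) (s A) y))"
    using s_impl unfolding implements_def by auto
  have FoIn: "\<And>A. A \<in> Obj \<Longrightarrow> Fo A \<in> Obj" using FoB bij_betwE by blast
  have siso: "\<And>A. A \<in> Obj \<Longrightarrow> s A \<in> iso ar A (transport A (s A))"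
    using sb transport_iso bij_betw_def by metis
  have tc: "\<And>A. A \<in> Obj \<Longrightarrow> ucarrier (transport A (s A)) = ucarrier (Fo A)"
    using sb unfolding transport_def bij_betw_def by auto
  have homc: "\<And>h A B x. h \<in> Hom ar A B \<Longrightarrow> x \<in> ucarrier A \<Longrightarrow> h x \<in> ucarrier B"
    unfolding Hom_def hom_def by auto
  show ?thesis
  proof
    assume "inner ar Obj Fo Fm"
    then obtain t where tb: "\<And>A. A \<in> Obj \<Longrightarrow> bij_betw (t A) (ucarrier A) (ucarrier (Fo A))"
      and tF: "\<And>A B \<mu> y. A \<in> Obj \<Longrightarrow> B \<in> Obj \<Longrightarrow> \<mu> \<in> Hom ar A B \<Longrightarrow> y \<in> ucarrier (Fo A) \<Longrightarrow>
        Fm A B \<mu> y = t B (\<mu> (inv_into (ucarrier A) (t A) y))"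
      and tiso: "\<And>A. A \<in> Obj \<Longrightarrow> t A \<in> iso ar A (Fo A)"
      unfolding inner_def implements_def by blast
    define P where "P X = inv_into Obj Fo X" for X
    define c where "c X = (\<lambda>y. s (P X) (inv_into (ucarrier (P X)) (t (P X)) y))" for X
    have PIn: "\<And>X. X \<in> Obj \<Longrightarrow> P X \<in> Obj" unfolding P_def
      using FoB by (meson bij_betwE bij_betw_inv_into)
    have FoP: "\<And>X. X \<in> Obj \<Longrightarrow> Fo (P X) = X" unfolding P_def
      using FoB by (meson bij_betw_inv_into_right)
    have PFo: "\<And>A. A \<in> Obj \<Longrightarrow> P (Fo A) = A" unfolding P_def
      using FoB by (meson bij_betw_inv_into_left)
    have cbA: "bij_betw (c X) (ucarrier X) (ucarrier X)" if X: "X \<in> Obj" for X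
    proof -
      have "bij_betw (inv_into (ucarrier (P X)) (t (P X))) (ucarrier X) (ucarrier (P X))"
        using tb[OF PIn[OF X]] FoP[OF X] bij_betw_inv_into by metis
      then have "bij_betw (s (P X) \<circ> inv_into (ucarrier (P X)) (t (P X))) (ucarrier X) (ucarrier X)"
        using sb[OF PIn[OF X]] FoP[OF X] bij_betw_trans by metis
      then show ?thesis unfolding c_def comp_def .
    qed
    have cent: "c Y (\<nu> (inv_into (ucarrier X) (c X) x)) = \<nu> x"
      if X: "X \<in> Obj" and Y: "Y \<in> Obj" and nu: "\<nu> \<in> Hom ar X Y" and x: "x \<in> ucarrier X" for X Y \<nu> x
    proof -
      let ?A = "P X" and ?B = "P Y"
      have A: "?A \<in> Obj" and B: "?B \<in> Obj" using PIn X Y by auto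
      have "\<nu> \<in> Hom ar (Fo ?A) (Fo ?B)" using nu FoP X Y by simp
      then obtain \<mu> where mu: "\<mu> \<in> Hom ar ?A ?B" and nuE: "\<nu> = Fm ?A ?B \<mu>"
        using FmB[OF A B] by (metis bij_betw_imp_surj_on imageE)
      have xA: "x \<in> ucarrier (Fo ?A)" using x FoP X by simp
      have tib: "bij_betw (inv_into (ucarrier ?A) (t ?A)) (ucarrier (Fo ?A)) (ucarrier ?A)"
        using tb[OF A] bij_betw_inv_into by metis
      define z where "z = inv_into (ucarrier ?A) (s ?A) x"
      have zA: "z \<in> ucarrier ?A" unfolding z_def using sb[OF A] xA
        by (meson bij_betwE bij_betw_inv_into)
      have "inv_into (ucarrier X) (c X) x =
          inv_into (ucarrier (Fo ?A)) (inv_into (ucarrier ?A) (t ?A)) (inv_into (ucarrier ?A) (s ?A) x)"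
        unfolding c_def using inv_comp[OF tib sb[OF A] xA] FoP[OF X] by simp
      also have "\<dots> = t ?A z"
        using inv_into_inv_into_eq[OF tb[OF A] zA] by (simp add: z_def)
      finally have e1: "inv_into (ucarrier X) (c X) x = t ?A z" .
      have tzA: "t ?A z \<in> ucarrier (Fo ?A)" using tb[OF A] zA bij_betwE by blast
      have "\<nu> (t ?A z) = t ?B (\<mu> z)"
        using tF[OF A B mu tzA] nuE bij_betw_inv_into_left[OF tb[OF A] zA] by simp
      moreover have "c Y (t ?B (\<mu> z)) = s ?B (\<mu> z)"
        unfolding c_def using bij_betw_inv_into_left[OF tb[OF B] homc[OF mu zA]] by simp
      moreover have "\<nu> x = s ?B (\<mu> z)" using sF[OF A B mu xA] nuE z_def by simp
      ultimately show ?thesis using e1 by simp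
    qed
    have ciso: "c (Fo A) \<in> iso ar (Fo A) (transport A (s A))" if A: "A \<in> Obj" for A
    proof -
      have "inv_into (ucarrier A) (t A) \<in> iso ar (Fo A) A" using iso_inv alg A tiso by blast
      then have "(\<lambda>x. s A (inv_into (ucarrier A) (t A) x)) \<in> iso ar (Fo A) (transport A (s A))"
        using iso_comp siso A by blast
      then show ?thesis unfolding c_def using PFo A by simp
    qed
    show "\<exists>c. central_function ar Obj c \<and>
       (\<forall>A\<in>Obj. c (Fo A) \<in> iso ar (Fo A) (transport A (s A)))"
      using cbA cent ciso unfolding central_function_def by blast
  next
    assume "\<exists>c. central_function ar Obj c \<and>
       (\<forall>A\<in>Obj. c (Fo A) \<in> iso ar (Fo A) (transport A (s A)))"
    then obtain c where cb: "\<And>A. A \<in> Obj \<Longrightarrow> bij_betw (c A) (ucarrier A) (ucarrier A)"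
      and cc: "\<And>A B \<nu> x. A \<in> Obj \<Longrightarrow> B \<in> Obj \<Longrightarrow> \<nu> \<in> Hom ar A B \<Longrightarrow> x \<in> ucarrier A \<Longrightarrow>
        c B (\<nu> (inv_into (ucarrier A) (c A) x)) = \<nu> x"
      and ciso: "\<And>A. A \<in> Obj \<Longrightarrow> c (Fo A) \<in> iso ar (Fo A) (transport A (s A))"
      unfolding central_function_def by blast
    define t where "t A = (\<lambda>x. inv_into (ucarrier (Fo A)) (c (Fo A)) (s A x))" for A
    have cinvb: "\<And>A. A \<in> Obj \<Longrightarrow> bij_betw (inv_into (ucarrier (Fo A)) (c (Fo A))) (ucarrier (Fo A)) (ucarrier (Fo A))"
      using cb FoIn bij_betw_inv_into by metis
    have tb: "bij_betw (t A) (ucarrier A) (ucarrier (Fo A))" if A: "A \<in> Obj" for A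
      using bij_betw_trans[OF sb[OF A] cinvb[OF A]] unfolding t_def comp_def .
    have cinv: "c B (\<nu> y) = \<nu> (c A y)"
      if A: "A \<in> Obj" and B: "B \<in> Obj" and nu: "\<nu> \<in> Hom ar A B" and y: "y \<in> ucarrier A" for A B \<nu> y
    proof -
      have "c A y \<in> ucarrier A" using cb A y bij_betwE by blast
      moreover have "inv_into (ucarrier A) (c A) (c A y) = y" using cb A y bij_betw_inv_into_left by metis
      ultimately show ?thesis using cc[OF A B nu, of "c A y"] by simp
    qed
    have tF: "Fm A B \<mu> y = t B (\<mu> (inv_into (ucarrier A) (t A) y))"
      if A: "A \<in> Obj" and B: "B \<in> Obj" and mu: "\<mu> \<in> Hom ar A B" and y: "y \<in> ucarrier (Fo A)" for A B \<mu> y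
    proof -
      have cy: "c (Fo A) y \<in> ucarrier (Fo A)" using cb FoIn A y bij_betwE by blast
      have "inv_into (ucarrier A) (t A) y = inv_into (ucarrier A) (s A) (c (Fo A) y)"
        unfolding t_def using inv_comp[OF sb[OF A] cinvb[OF A] y] inv_into_inv_into_eq[OF cb[OF FoIn[OF A]] y]
        by simp
      then have e0: "t B (\<mu> (inv_into (ucarrier A) (t A) y)) =
          inv_into (ucarrier (Fo B)) (c (Fo B)) (Fm A B \<mu> (c (Fo A) y))"
        unfolding t_def using sF[OF A B mu cy] by simp
      have FmH: "Fm A B \<mu> \<in> Hom ar (Fo A) (Fo B)" using FmB[OF A B] mu bij_betwE by blast
      have e1: "Fm A B \<mu> (c (Fo A) y) = c (Fo B) (Fm A B \<mu> y)"
        using cinv[OF FoIn[OF A] FoIn[OF B] FmH y] by simp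
      have e2: "inv_into (ucarrier (Fo B)) (c (Fo B)) (c (Fo B) (Fm A B \<mu> y)) = Fm A B \<mu> y"
        using bij_betw_inv_into_left[OF cb[OF FoIn[OF B]] homc[OF FmH y]] .
      show ?thesis using e0 e1 e2 by simp
    qed
    have tiso: "t A \<in> iso ar A (Fo A)" if A: "A \<in> Obj" for A
    proof -
      have "is_alg ar (Fo A)" using alg FoIn A by blast
      then have "inv_into (ucarrier (Fo A)) (c (Fo A)) \<in> iso ar (transport A (s A)) (Fo A)"
        using iso_inv ciso A by blast
      then show ?thesis unfolding t_def using iso_comp siso A by blast
    qed
    show "inner ar Obj Fo Fm" unfolding inner_def implements_def
      using tb tF tiso by blast
  qed
qed

end
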